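(* Let $H$ be a Hilbert space and, for $i=1,2$, let $(K_i,[\cdot,\cdot]_i)$ be Pontryagin spaces, $A_i$ self-adjoint linear relations in $K_i$, $z_0\in\rho(A_1)\cap\rho(A_2)\cap\mathbb{C}^+$, $\Gamma_i:H\to K_i$ bounded, and $$Q_i(z)=Q_i(z_0)^*+(z-\bar z_0)\Gamma_i^+\big(I_i+(z-z_0)(A_i-z)^{-1}\big)\Gamma_i .$$ Let $\tilde K=K_1[+]K_2$ (orthogonal direct sum), let $A=A_1\oplus A_2=\{\{k_1[+]k_2,h_1[+]h_2\}:\{k_i,h_i\}\in A_i\}$, and let $\Gamma:H\to\tilde K$, $\Gamma h=\Gamma_1h[+]\Gamma_2h$, so that $\Gamma^+(k_1[+]k_2)=\Gamma_1^+k_1+\Gamma_2^+k_2$. Then $Q:=Q_1+Q_2$ satisfies $$Q(z)=Q_1(z_0)^*+Q_2(z_0)^*+(z-\bar z_0)\Gamma^+\big(I+(z-z_0)(A-z)^{-1}\big)\Gamma. \tag{14}$$ (i) If $\Gamma^+:\tilde K\to H$ is injective, then the representation (14) is minimal, i.e. $\tilde K=\overline{\operatorname{span}}\{(I+(z-z_0)(A-z)^{-1})\Gamma h: z\in\rho(A),h\in H\}$. (ii) Suppose instead that $A_i$ are bounded self-adjoint operators in $K_i$, $\Gamma_{0i}:H\to K_i$ are bounded, $Q_i(z)=\Gamma_{0i}^+(A_i-z)^{-1}\Gamma_{0i}$, and with $\Gamma_0h:=\Gamma_{01}h[+]\Gamma_{02}h$ and $A=A_1\oplus A_2$ the representation $Q(z):=Q_1(z)+Q_2(z)=\Gamma_0^+(A-z)^{-1}\Gamma_0$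 is minimal, i.e. $K_1[+]K_2=\overline{\operatorname{span}}\{(A-z)^{-1}\Gamma_0h:z\in\rho(A),h\in H\}$. If at least one of $\Gamma_{01},\Gamma_{02}$ is injective, then: whenever $f\in H$ satisfies $(f,Q(z)h)=0$ for all $z\in\rho(A)$ and all $h\in H$, it follows that $f=0$.
   Context: $H$ is a Hilbert space with inner product $(\cdot,\cdot)$. A Pontryagin space is a Krein space whose indefinite inner product $[\cdot,\cdot]$ has finitely many negative squares. For a bounded operator $\Gamma:H\to K$ into a Pontryagin space, $\Gamma^+:K\to H$ is defined by $(h,\Gamma^+k)=[\Gamma h,k]$. $K_1[+]K_2$ denotes the orthogonal direct sum with inner product $[k_1+k_2,k_1'+k_2']=[k_1,k_1']_1+[k_2,k_2']_2$. *)

theory Defs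
  imports "HOL-Analysis.Analysis"
begin

(* Complex vector space structure on a (real) normed space 'a, given by an explicit
   complex scalar multiplication sm, compatible with the real scaling and the norm. *)
definition cnvs :: "(complex \<Rightarrow> 'a::real_normed_vector \<Rightarrow> 'a) \<Rightarrow> bool" where
  "cnvs sm \<longleftrightarrow> Vector_Spaces.vector_space sm
     \<and> (\<forall>r x. sm (complex_of_real r) x = r *\<^sub>R x)
     \<and> (\<forall>c x. norm (sm c x) = cmod c * norm x)"

definition sesq :: "(complex \<Rightarrow> 'a::plus \<Rightarrow> 'a) \<Rightarrow> ('a \<Rightarrow> 'a \<Rightarrow> complex) \<Rightarrow> bool" where
  "sesq sm F \<longleftrightarrow> (\<forall>x y z. F (x + y) z = F x z + F y z)
     \<and> (\<forall>c x y. F (sm c x) y = c * F x y)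
     \<and> (\<forall>x y. F y x = cnj (F x y))"

definition chilbert :: "(complex \<Rightarrow> 'h::banach \<Rightarrow> 'h) \<Rightarrow> ('h \<Rightarrow> 'h \<Rightarrow> complex) \<Rightarrow> bool" where
  "chilbert sm ip \<longleftrightarrow> cnvs sm \<and> sesq sm ip \<and> (\<forall>x. ip x x = complex_of_real ((norm x)\<^sup>2))"

(* Pontryagin space: Krein space (with fundamental symmetry J, whose J-inner product
   [x, J y] gives the Hilbert norm of 'k) such that the negative part {x. J x = -x}
   is finite-dimensional, i.e. B has finitely many negative squares. *)
definition pontryagin :: "(complex \<Rightarrow> 'k::banach \<Rightarrow> 'k) \<Rightarrow> ('k \<Rightarrow> 'k \<Rightarrow> complex) \<Rightarrow> bool" where
  "pontryagin sm B \<longleftrightarrow> cnvs sm \<and> sesq sm B \<and>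
     (\<exists>J. Vector_Spaces.linear sm sm J \<and> (\<forall>x. J (J x) = x)
        \<and> (\<forall>x y. B (J x) y = B x (J y))
        \<and> (\<forall>x. B x (J x) = complex_of_real ((norm x)\<^sup>2))
        \<and> (\<exists>S. finite S \<and> {x. J x = - x} \<subseteq> module.span sm S))"

definition cbounded :: "(complex \<Rightarrow> 'a::real_normed_vector \<Rightarrow> 'a) \<Rightarrow> (complex \<Rightarrow> 'b::real_normed_vector \<Rightarrow> 'b)
     \<Rightarrow> ('a \<Rightarrow> 'b) \<Rightarrow> bool" where
  "cbounded s1 s2 T \<longleftrightarrow> Vector_Spaces.linear s1 s2 T \<and> (\<exists>C. \<forall>x. norm (T x) \<le> C * norm x)"

definition has_kadj :: "('h \<Rightarrow> 'h \<Rightarrow> complex) \<Rightarrow> ('k \<Rightarrow> 'k \<Rightarrow> complex) \<Rightarrow> ('h \<Rightarrow> 'k) \<Rightarrow> bool" where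
  "has_kadj ip B G \<longleftrightarrow> (\<exists>G'. \<forall>h k. ip h (G' k) = B (G h) k)"

definition kadj :: "('h \<Rightarrow> 'h \<Rightarrow> complex) \<Rightarrow> ('k \<Rightarrow> 'k \<Rightarrow> complex) \<Rightarrow> ('h \<Rightarrow> 'k) \<Rightarrow> ('k \<Rightarrow> 'h)" where
  "kadj ip B G = (THE G'. \<forall>h k. ip h (G' k) = B (G h) k)"

definition prod_sm :: "(complex \<Rightarrow> 'a \<Rightarrow> 'a) \<Rightarrow> (complex \<Rightarrow> 'b \<Rightarrow> 'b) \<Rightarrow> complex \<Rightarrow> 'a \<times> 'b \<Rightarrow> 'a \<times> 'b" where
  "prod_sm s1 s2 c p = (s1 c (fst p), s2 c (snd p))"

definition lin_rel :: "(complex \<Rightarrow> 'k::ab_group_add \<Rightarrow> 'k) \<Rightarrow> ('k \<times> 'k) set \<Rightarrow> bool" where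
  "lin_rel sm A \<longleftrightarrow> module.subspace (prod_sm sm sm) A"

definition rel_adj :: "('k \<Rightarrow> 'k \<Rightarrow> complex) \<Rightarrow> ('k \<times> 'k) set \<Rightarrow> ('k \<times> 'k) set" where
  "rel_adj B A = {(k, h). \<forall>(f, g) \<in> A. B g k = B f h}"

definition selfadj_rel :: "(complex \<Rightarrow> 'k::ab_group_add \<Rightarrow> 'k) \<Rightarrow> ('k \<Rightarrow> 'k \<Rightarrow> complex) \<Rightarrow> ('k \<times> 'k) set \<Rightarrow> bool" where
  "selfadj_rel sm B A \<longleftrightarrow> lin_rel sm A \<and> rel_adj B A = A"

(* (A - z)^{-1} = {{g - z f, f}. {f,g} in A}, evaluated at k *)
definition resolv :: "(complex \<Rightarrow> 'k::plus \<Rightarrow> 'k) \<Rightarrow> ('k \<times> 'k) set \<Rightarrow> complex \<Rightarrow> 'k \<Rightarrow> 'k" where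
  "resolv sm A z k = (THE f. (f, k + sm z f) \<in> A)"

(* resolvent set: (A - z)^{-1} is an everywhere defined bounded operator *)
definition rset :: "(complex \<Rightarrow> 'k::real_normed_vector \<Rightarrow> 'k) \<Rightarrow> ('k \<times> 'k) set \<Rightarrow> complex set" where
  "rset sm A = {z. (\<forall>k. \<exists>!f. (f, k + sm z f) \<in> A) \<and> cbounded sm sm (resolv sm A z)}"

definition gr :: "('k \<Rightarrow> 'k) \<Rightarrow> ('k \<times> 'k) set" where
  "gr T = {(x, T x) | x. True}"

definition psum :: "('a \<Rightarrow> 'a \<Rightarrow> complex) \<Rightarrow> ('b \<Rightarrow> 'b \<Rightarrow> complex) \<Rightarrow> 'a \<times> 'b \<Rightarrow> 'a \<times> 'b \<Rightarrow> complex" where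
  "psum B1 B2 p q = B1 (fst p) (fst q) + B2 (snd p) (snd q)"

definition dsum :: "('a \<times> 'a) set \<Rightarrow> ('b \<times> 'b) set \<Rightarrow> (('a \<times> 'b) \<times> ('a \<times> 'b)) set" where
  "dsum A1 A2 = {((k1, k2), (h1, h2)) | k1 k2 h1 h2. (k1, h1) \<in> A1 \<and> (k2, h2) \<in> A2}"

end

theory Submission
  imports Defs
begin


locale chil =
  fixes sm :: "complex \<Rightarrow> 'a::banach \<Rightarrow> 'a" and P :: "'a \<Rightarrow> 'a \<Rightarrow> complex"
  assumes ch: "chilbert sm P"
begin

lemma vs: "vector_space sm" using ch by (simp add: chilbert_def cnvs_def)
lemma smR: "sm (complex_of_real r) x = r *\<^sub>R x" using ch by (simp add: chilbert_def cnvs_def)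
lemma smN: "norm (sm c x) = cmod c * norm x" using ch by (simp add: chilbert_def cnvs_def)
lemma Padd: "P (x + y) z = P x z + P y z" using ch unfolding chilbert_def sesq_def by blast
lemma Psc: "P (sm c x) y = c * P x y" using ch unfolding chilbert_def sesq_def by blast
lemma Pcnj: "P y x = cnj (P x y)" using ch unfolding chilbert_def sesq_def by blast
lemma Pn: "P x x = complex_of_real ((norm x)\<^sup>2)" using ch by (simp add: chilbert_def)

lemma Padd2: "P z (x + y) = P z x + P z y"
  by (metis Padd Pcnj complex_cnj_add)
lemma Psc2: "P y (sm c x) = cnj c * P y x"
  by (metis Psc Pcnj complex_cnj_mult)
lemma smadd: "sm c (x + y) = sm c x + sm c y"
  using vs by (simp add: vector_space_def)
lemma smadd2: "sm (a + b) x = sm a x + sm b x"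
  using vs by (simp add: vector_space_def)
lemma smsc: "sm a (sm b x) = sm (a * b) x"
  using vs by (simp add: vector_space_def)
lemma Pminus: "P (- x) y = - P x y"
proof -
  have "- x = sm (complex_of_real (-1)) x" using smR[of "-1" x] by simp
  thus ?thesis by (simp add: Psc)
qed
lemma Pdiff: "P (x - y) z = P x z - P y z"
  by (metis Padd Pminus diff_conv_add_uminus)
lemma Pminus2: "P y (- x) = - P y x"
  by (metis Pminus Pcnj complex_cnj_minus)
lemma Pdiff2: "P z (x - y) = P z x - P z y"
  by (metis Padd2 Pminus2 diff_conv_add_uminus)
lemma P0: "P 0 y = 0" by (metis Pdiff diff_self)
lemma P02: "P y 0 = 0" by (metis Pdiff2 diff_self)

lemma bl_sm: "bounded_linear (sm c)"
proof
  fix x y show "sm c (x + y) = sm c x + sm c y" by (rule smadd)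
next
  fix r x show "sm c (r *\<^sub>R x) = r *\<^sub>R sm c x"
    by (metis smR smsc mult.commute)
next
  show "\<exists>K. \<forall>x. norm (sm c x) \<le> norm x * K"
    by (rule exI[of _ "cmod c"]) (simp add: smN mult.commute)
qed

lemma polar: "4 * P y x = complex_of_real ((norm (y + x))\<^sup>2) - complex_of_real ((norm (y - x))\<^sup>2)
   + \<i> * complex_of_real ((norm (y + sm \<i> x))\<^sup>2) - \<i> * complex_of_real ((norm (y - sm \<i> x))\<^sup>2)"
  apply (simp only: Pn[symmetric] Padd Padd2 Pdiff Pdiff2 Psc Psc2)
  apply (subst Pcnj[of x y])
  apply (simp add: algebra_simps)
  apply (rule Pcnj)
  done

lemma contP: "continuous_on UNIV (\<lambda>y. P y x)"
proof -
  have eq: "(\<lambda>y. P y x) = (\<lambda>y. (complex_of_real ((norm (y + x))\<^sup>2) - complex_of_real ((norm (y - x))\<^sup>2)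
   + \<i> * complex_of_real ((norm (y + sm \<i> x))\<^sup>2) - \<i> * complex_of_real ((norm (y - sm \<i> x))\<^sup>2)) / 4)"
    using polar by (auto simp: field_simps)
  show ?thesis by (subst eq) (intro continuous_intros, auto)
qed

lemma md: "module sm" using vs by (simp add: module_iff_vector_space)

lemma expand: "(norm (x - t *\<^sub>R u))\<^sup>2 = (norm x)\<^sup>2 - 2*t*Re (P u x) + t\<^sup>2 * (norm u)\<^sup>2"
proof -
  have "complex_of_real ((norm (x - t *\<^sub>R u))\<^sup>2) = P (x - sm (complex_of_real t) u) (x - sm (complex_of_real t) u)"
    by (simp add: Pn smR)
  also have "\<dots> = P x x - complex_of_real t * P u x - complex_of_real t * P x u + complex_of_real t * complex_of_real t * P u u"
    by (simp add: Pdiff Pdiff2 Psc Psc2 algebra_simps)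
  also have "P x u = cnj (P u x)" by (rule Pcnj)
  finally have "complex_of_real ((norm (x - t *\<^sub>R u))\<^sup>2) = complex_of_real ((norm x)\<^sup>2) - complex_of_real t * (P u x + cnj (P u x)) + complex_of_real (t\<^sup>2 * (norm u)\<^sup>2)"
    by (simp add: Pn algebra_simps power2_eq_square)
  also have "P u x + cnj (P u x) = complex_of_real (2 * Re (P u x))"
    by (simp add: complex_add_cnj)
  finally have "complex_of_real ((norm (x - t *\<^sub>R u))\<^sup>2) = complex_of_real ((norm x)\<^sup>2 - 2*t*Re (P u x) + t\<^sup>2 * (norm u)\<^sup>2)"
    by simp
  thus ?thesis using of_real_eq_iff by blast
qed

lemma re_zero:
  assumes "\<And>t. (norm x)\<^sup>2 \<le> (norm (x - t *\<^sub>R u))\<^sup>2" shows "Re (P u x) = 0"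
proof (rule ccontr)
  define a where "a = Re (P u x)"
  define c where "c = (norm u)\<^sup>2 + 1"
  define t where "t = a / c"
  assume "Re (P u x) \<noteq> 0"
  hence a: "a \<noteq> 0" by (simp add: a_def)
  have c: "c > 0" unfolding c_def by (smt (verit) zero_le_power2)
  have tc: "t * c = a" using c by (simp add: t_def)
  have "(norm x)\<^sup>2 \<le> (norm x)\<^sup>2 - 2*t*a + t\<^sup>2 * (norm u)\<^sup>2"
    using assms[of t] by (simp add: expand a_def)
  hence h: "0 \<le> - 2*t*a + t\<^sup>2 * (norm u)\<^sup>2" by simp
  have "t\<^sup>2 * (norm u)\<^sup>2 \<le> t\<^sup>2 * c" by (simp add: c_def distrib_left)
  also have "t\<^sup>2 * c = t * a" using tc by (simp add: power2_eq_square mult.assoc)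
  finally have "0 \<le> - t * a" using h by simp
  moreover have "t * a > 0"
  proof -
    have aa: "0 < a*a" using a by (simp add: zero_less_mult_iff linorder_neq_iff) blast
    have "t * a = (a*a)/c" by (simp add: t_def)
    thus ?thesis using aa c by simp
  qed
  ultimately show False by simp
qed

lemma PnR: "Re (P x x) = (norm x)\<^sup>2" by (simp add: Pn)

lemma par: fixes a b :: 'a shows "(norm (a - b))\<^sup>2 + (norm (a + b))\<^sup>2 = 2 * (norm a)\<^sup>2 + 2 * (norm b)\<^sup>2"
proof -
  have "P (a - b) (a - b) + P (a + b) (a + b) = 2 * P a a + 2 * P b b"
    by (simp add: Padd Padd2 Pdiff Pdiff2)
  hence "Re (P (a - b) (a - b) + P (a + b) (a + b)) = Re (2 * P a a + 2 * P b b)" by simp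
  thus ?thesis by (simp add: PnR)
qed

lemma proj:
  assumes cl: "closed M" and sub: "module.subspace sm M" and y: "y \<notin> M"
  shows "\<exists>x. x \<noteq> 0 \<and> (\<forall>u\<in>M. P u x = 0)"
proof -
  have M0: "0 \<in> M" using sub md module.subspace_0 by blast
  have Madd: "\<And>a b. a \<in> M \<Longrightarrow> b \<in> M \<Longrightarrow> a + b \<in> M" using sub md module.subspace_add by blast
  have Msc: "\<And>c a. a \<in> M \<Longrightarrow> sm c a \<in> M" using sub md module.subspace_scale by blast
  have MR: "\<And>r a. a \<in> M \<Longrightarrow> r *\<^sub>R a \<in> M" using Msc smR by metis
  have Mne: "M \<noteq> {}" using M0 by blast
  define d where "d = infdist y M"
  have dpos: "d > 0" unfolding d_def using infdist_pos_not_in_closed[OF cl Mne y] .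
  have dle: "\<And>u. u \<in> M \<Longrightarrow> d \<le> dist y u" unfolding d_def by (rule infdist_le)
  have "\<forall>n. \<exists>m\<in>M. dist y m < d + inverse (real (Suc n))"
  proof
    fix n
    have "(INF a\<in>M. dist y a) < d + inverse (real (Suc n))"
      using infdist_notempty[OF Mne, of y] d_def by simp
    thus "\<exists>m\<in>M. dist y m < d + inverse (real (Suc n))"
      using cINF_less_iff[OF Mne bdd_below_image_dist] by blast
  qed
  then obtain m where mM: "\<And>n. m n \<in> M" and md: "\<And>n. dist y (m n) < d + inverse (real (Suc n))"
    by metis
  have key: "(norm (m k - m n))\<^sup>2 \<le> 2 * (d + inverse (real (Suc n)))\<^sup>2 + 2 * (d + inverse (real (Suc k)))\<^sup>2 - 4 * d\<^sup>2" for n k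
  proof -
    define a where "a = y - m n"
    define b where "b = y - m k"
    have "(1/2) *\<^sub>R (m n + m k) \<in> M" using mM Madd MR by blast
    hence "d \<le> dist y ((1/2) *\<^sub>R (m n + m k))" by (rule dle)
    also have "dist y ((1/2) *\<^sub>R (m n + m k)) = (1/2) * norm (a + b)"
    proof -
      have "a + b = 2 *\<^sub>R (y - (1/2) *\<^sub>R (m n + m k))" by (simp add: a_def b_def algebra_simps scaleR_2)
      thus ?thesis by (simp add: dist_norm)
    qed
    finally have h1: "2 * d \<le> norm (a + b)" by simp
    hence h1': "4 * d\<^sup>2 \<le> (norm (a + b))\<^sup>2" using dpos power_mono[OF h1, of 2]
      by (simp add: power_mult_distrib)
    have h2: "norm a \<le> d + inverse (real (Suc n))" using md[of n] by (simp add: a_def dist_norm)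
    have h3: "norm b \<le> d + inverse (real (Suc k))" using md[of k] by (simp add: b_def dist_norm)
    have h2': "(norm a)\<^sup>2 \<le> (d + inverse (real (Suc n)))\<^sup>2" using h2 by (simp add: power_mono)
    have h3': "(norm b)\<^sup>2 \<le> (d + inverse (real (Suc k)))\<^sup>2" using h3 by (simp add: power_mono)
    have "m k - m n = a - b" by (simp add: a_def b_def)
    hence "(norm (m k - m n))\<^sup>2 = 2 * (norm a)\<^sup>2 + 2 * (norm b)\<^sup>2 - (norm (a + b))\<^sup>2"
      using par[of a b] by simp
    thus ?thesis using h1' h2' h3' by linarith
  qed
  have "Cauchy m"
  proof (rule metric_CauchyI)
    fix e :: real assume e: "e > 0"
    define \<delta> where "\<delta> = min 1 (e\<^sup>2 / (8 * (2 * d + 1)))"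
    have dl: "\<delta> > 0" using e dpos by (simp add: \<delta>_def)
    obtain N where N: "inverse (real (Suc N)) < \<delta>" using reals_Archimedean[OF dl] by auto
    show "\<exists>N. \<forall>k\<ge>N. \<forall>n\<ge>N. dist (m k) (m n) < e"
    proof (intro exI allI impI)
      fix k n assume k: "k \<ge> N" and n: "n \<ge> N"
      have i1: "inverse (real (Suc n)) < \<delta>"
        using N n by (smt (verit) le_imp_inverse_le of_nat_0_less_iff of_nat_le_iff Suc_le_mono zero_less_Suc)
      have i2: "inverse (real (Suc k)) < \<delta>"
        using N k by (smt (verit) le_imp_inverse_le of_nat_0_less_iff of_nat_le_iff Suc_le_mono zero_less_Suc)
      have p1: "inverse (real (Suc n)) > 0" "inverse (real (Suc k)) > 0" by auto
      have "(d + inverse (real (Suc n)))\<^sup>2 \<le> (d + \<delta>)\<^sup>2" using i1 p1 dpos by (intro power_mono) auto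
      moreover have "(d + inverse (real (Suc k)))\<^sup>2 \<le> (d + \<delta>)\<^sup>2" using i2 p1 dpos by (intro power_mono) auto
      ultimately have "(norm (m k - m n))\<^sup>2 \<le> 4 * (d + \<delta>)\<^sup>2 - 4 * d\<^sup>2" using key[of k n] by linarith
      also have "\<dots> = 4 * \<delta> * (2 * d + \<delta>)" by (simp add: power2_eq_square algebra_simps)
      also have "\<dots> \<le> 4 * \<delta> * (2 * d + 1)" using dl by (simp add: \<delta>_def)
      also have "\<dots> \<le> 4 * (e\<^sup>2 / (8 * (2 * d + 1))) * (2 * d + 1)"
        using dpos dl by (intro mult_right_mono mult_left_mono) (auto simp: \<delta>_def)
      also have "\<dots> < e\<^sup>2" using dpos e by (simp add: field_simps add_pos_pos)
      finally have "(norm (m k - m n))\<^sup>2 < e\<^sup>2" .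
      hence "norm (m k - m n) < e" using e by (simp add: power_less_imp_less_base)
      thus "dist (m k) (m n) < e" by (simp add: dist_norm)
    qed
  qed
  then obtain L where L: "m \<longlonglongrightarrow> L" using Cauchy_convergent convergent_def by blast
  have LM: "L \<in> M" using closed_sequentially[OF cl] mM L by blast
  have "dist y L \<le> d"
  proof (rule LIMSEQ_le)
    show "(\<lambda>n. dist y (m n)) \<longlonglongrightarrow> dist y L" by (intro tendsto_intros L)
    show "(\<lambda>n. d + inverse (real (Suc n))) \<longlonglongrightarrow> d"
      using tendsto_add[OF tendsto_const LIMSEQ_inverse_real_of_nat, of d] by simp
    show "\<exists>N. \<forall>n\<ge>N. dist y (m n) \<le> d + inverse (real (Suc n))" using md less_imp_le by blast
  qed
  define x where "x = y - L"
  have x0: "x \<noteq> 0" using y LM by (auto simp: x_def)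
  have minx: "(norm x)\<^sup>2 \<le> (norm (x - t *\<^sub>R u))\<^sup>2" if "u \<in> M" for u t
  proof -
    have "L + t *\<^sub>R u \<in> M" using that LM Madd MR by blast
    hence "d \<le> dist y (L + t *\<^sub>R u)" by (rule dle)
    hence "norm x \<le> norm (x - t *\<^sub>R u)" using \<open>dist y L \<le> d\<close>
      by (simp add: x_def dist_norm algebra_simps)
    thus ?thesis by (simp add: power_mono)
  qed
  have "\<forall>u\<in>M. P u x = 0"
  proof
    fix u assume u: "u \<in> M"
    have r1: "Re (P u x) = 0" by (rule re_zero) (rule minx[OF u])
    have "Re (P (sm \<i> u) x) = 0" by (rule re_zero) (rule minx[OF Msc[OF u]])
    hence r2: "Im (P u x) = 0" by (simp add: Psc)
    show "P u x = 0" using r1 r2 by (simp add: complex_eq_iff)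
  qed
  thus ?thesis using x0 by blast
qed

lemma closure_subspace:
  assumes V: "module.subspace sm V" shows "module.subspace sm (closure V)"
proof -
  have V0: "0 \<in> V" using V md module.subspace_0 by blast
  have Vadd: "\<And>a b. a \<in> V \<Longrightarrow> b \<in> V \<Longrightarrow> a + b \<in> V" using V md module.subspace_add by blast
  have Vsc: "\<And>c a. a \<in> V \<Longrightarrow> sm c a \<in> V" using V md module.subspace_scale by blast
  show ?thesis
  proof (rule module.subspaceI[OF md])
    show "0 \<in> closure V" using V0 closure_subset by blast
  next
    fix x y assume "x \<in> closure V" "y \<in> closure V"
    then obtain f g where f: "\<And>n. f n \<in> V" "f \<longlonglongrightarrow> x" and g: "\<And>n. g n \<in> V" "g \<longlonglongrightarrow> y"
      unfolding closure_sequential by metis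
    have "(\<lambda>n. f n + g n) \<longlonglongrightarrow> x + y" using f g by (intro tendsto_add) auto
    moreover have "\<And>n. f n + g n \<in> V" using f g Vadd by blast
    ultimately show "x + y \<in> closure V" unfolding closure_sequential by (intro exI[of _ "\<lambda>n. f n + g n"]) auto
  next
    fix c x assume "x \<in> closure V"
    then obtain f where f: "\<And>n. f n \<in> V" "f \<longlonglongrightarrow> x"
      unfolding closure_sequential by metis
    have "(\<lambda>n. sm c (f n)) \<longlonglongrightarrow> sm c x" using f bounded_linear.tendsto[OF bl_sm] by blast
    moreover have "\<And>n. sm c (f n) \<in> V" using f Vsc by blast
    ultimately show "sm c x \<in> closure V" unfolding closure_sequential by (intro exI[of _ "\<lambda>n. sm c (f n)"]) auto
  qed
qed

lemma dense_iff: "closure (module.span sm S) = UNIV \<longleftrightarrow> (\<forall>x. (\<forall>s\<in>S. P s x = 0) \<longrightarrow> x = 0)"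
proof
  assume D: "closure (module.span sm S) = UNIV"
  show "\<forall>x. (\<forall>s\<in>S. P s x = 0) \<longrightarrow> x = 0"
  proof (intro allI impI)
    fix x assume Sx: "\<forall>s\<in>S. P s x = 0"
    have sub: "module.subspace sm {u. P u x = 0}"
      by (rule module.subspaceI[OF md]) (auto simp: P0 Padd Psc)
    have "module.span sm S \<subseteq> {u. P u x = 0}"
      using module.span_minimal[OF md _ sub] Sx by blast
    moreover have "closed {u. P u x = 0}"
      using closed_Collect_eq[OF contP continuous_on_const] .
    ultimately have "closure (module.span sm S) \<subseteq> {u. P u x = 0}" by (rule closure_minimal)
    hence "P x x = 0" using D by blast
    thus "x = 0" by (simp add: Pn)
  qed
next
  assume H: "\<forall>x. (\<forall>s\<in>S. P s x = 0) \<longrightarrow> x = 0"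
  show "closure (module.span sm S) = UNIV"
  proof (rule ccontr)
    assume "closure (module.span sm S) \<noteq> UNIV"
    then obtain y where y: "y \<notin> closure (module.span sm S)" by blast
    have sub: "module.subspace sm (closure (module.span sm S))"
      by (rule closure_subspace) (rule module.subspace_span[OF md])
    obtain x where x: "x \<noteq> 0" "\<forall>u\<in>closure (module.span sm S). P u x = 0"
      using proj[OF closed_closure sub y] by blast
    have "S \<subseteq> closure (module.span sm S)"
      using module.span_superset[OF md] closure_subset by blast
    thus False using x H by blast
  qed
qed

end




lemma pontr:
  assumes "pontryagin sm B"
  obtains J where "Vector_Spaces.linear sm sm J" "\<And>x. J (J x) = x" "\<And>x y. B (J x) y = B x (J y)"
    "chilbert sm (\<lambda>x y. B x (J y))" "\<And>x y. B y x = cnj (B x y)" "J 0 = 0"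
    "\<And>x y z. B x (y + z) = B x y + B x z" "\<And>x. B x 0 = 0"
proof -
  have cn: "cnvs sm" and se: "sesq sm B" using assms by (auto simp: pontryagin_def)
  obtain J where J: "Vector_Spaces.linear sm sm J" "\<And>x. J (J x) = x" "\<And>x y. B (J x) y = B x (J y)"
    "\<And>x. B x (J x) = complex_of_real ((norm x)\<^sup>2)"
    using assms unfolding pontryagin_def by blast
  have herm: "\<And>x y. B y x = cnj (B x y)" using se unfolding sesq_def by blast
  have badd: "\<And>x y z. B (x + y) z = B x z + B y z" using se unfolding sesq_def by blast
  have bsc: "\<And>c x y. B (sm c x) y = c * B x y" using se unfolding sesq_def by blast
  have badd2: "B x (y + z) = B x y + B x z" for x y z
  proof -
    have "B x (y + z) = cnj (B (y + z) x)" by (rule herm)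
    also have "\<dots> = cnj (B y x) + cnj (B z x)" by (simp only: badd complex_cnj_add)
    also have "cnj (B y x) = B x y" by (rule herm[symmetric])
    also have "cnj (B z x) = B x z" by (rule herm[symmetric])
    finally show ?thesis .
  qed
  have "J (0 + 0) = J 0 + J 0" using J(1)[unfolded Vector_Spaces.linear_iff] by blast
  hence J0: "J 0 = 0" by simp
  have B0: "B x 0 = 0" for x
  proof -
    have "B x (0 + 0) = B x 0 + B x 0" by (rule badd2)
    thus ?thesis by simp
  qed
  have "chilbert sm (\<lambda>x y. B x (J y))"
    unfolding chilbert_def sesq_def
  proof (intro conjI allI)
    show "cnvs sm" by (rule cn)
  next
    fix x y z show "B (x + y) (J z) = B x (J z) + B y (J z)" by (rule badd)
  next
    fix c x y show "B (sm c x) (J y) = c * B x (J y)" by (rule bsc)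
  next
    fix x y show "B y (J x) = cnj (B x (J y))" by (metis J(3) herm)
  next
    fix x show "B x (J x) = complex_of_real ((norm x)\<^sup>2)" by (rule J(4))
  qed
  thus ?thesis by (rule that[OF J(1) J(2) J(3) _ herm J0 badd2 B0])
qed

lemma vs_prod: assumes "vector_space s1" "vector_space s2" shows "vector_space (prod_sm s1 s2)"
proof -
  interpret v1: vector_space s1 by (rule assms(1))
  interpret v2: vector_space s2 by (rule assms(2))
  show ?thesis
    by unfold_locales (simp_all add: prod_sm_def v1.scale_right_distrib v2.scale_right_distrib
        v1.scale_left_distrib v2.scale_left_distrib)
qed


lemma chil_prod:
  fixes s1 :: "complex \<Rightarrow> 'a::banach \<Rightarrow> 'a" and s2 :: "complex \<Rightarrow> 'b::banach \<Rightarrow> 'b"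
  assumes "chilbert s1 P1" "chilbert s2 P2"
  shows "chilbert (prod_sm s1 s2) (\<lambda>x y. P1 (fst x) (fst y) + P2 (snd x) (snd y))"
proof -
  interpret c1: chil s1 P1 by unfold_locales (rule assms(1))
  interpret c2: chil s2 P2 by unfold_locales (rule assms(2))
  have cn: "cnvs (prod_sm s1 s2)"
    unfolding cnvs_def
  proof (intro conjI allI)
    show "vector_space (prod_sm s1 s2)" by (rule vs_prod[OF c1.vs c2.vs])
  next
    fix r and x :: "'a \<times> 'b" show "prod_sm s1 s2 (complex_of_real r) x = r *\<^sub>R x"
      by (cases x) (simp add: prod_sm_def c1.smR c2.smR)
  next
    fix c and x :: "'a \<times> 'b"
    obtain a b where x: "x = (a, b)" by (cases x)
    have "(norm (prod_sm s1 s2 c x))\<^sup>2 = (cmod c * norm x)\<^sup>2"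
      by (simp add: x prod_sm_def norm_Pair c1.smN c2.smN power_mult_distrib algebra_simps)
    thus "norm (prod_sm s1 s2 c x) = cmod c * norm x"
      by (simp add: power2_eq_iff_nonneg)
  qed
  show ?thesis
    unfolding chilbert_def sesq_def
  proof (intro conjI allI)
    show "cnvs (prod_sm s1 s2)" by (rule cn)
  next
    fix x y z :: "'a \<times> 'b"
    show "P1 (fst (x + y)) (fst z) + P2 (snd (x + y)) (snd z) = P1 (fst x) (fst z) + P2 (snd x) (snd z) + (P1 (fst y) (fst z) + P2 (snd y) (snd z))"
      by (simp add: c1.Padd c2.Padd)
  next
    fix c and x y :: "'a \<times> 'b"
    show "P1 (fst (prod_sm s1 s2 c x)) (fst y) + P2 (snd (prod_sm s1 s2 c x)) (snd y) = c * (P1 (fst x) (fst y) + P2 (snd x) (snd y))"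
      by (simp add: prod_sm_def c1.Psc c2.Psc algebra_simps)
  next
    fix x y :: "'a \<times> 'b"
    show "P1 (fst y) (fst x) + P2 (snd y) (snd x) = cnj (P1 (fst x) (fst y) + P2 (snd x) (snd y))"
      by (metis c1.Pcnj c2.Pcnj complex_cnj_add)
  next
    fix x :: "'a \<times> 'b"
    obtain a b where x: "x = (a, b)" by (cases x)
    show "P1 (fst x) (fst x) + P2 (snd x) (snd x) = complex_of_real ((norm x)\<^sup>2)"
      by (simp add: x c1.Pn c2.Pn norm_Pair)
  qed
qed





lemma ip_zero: assumes "chilbert smH ip" "\<And>h. ip h v = 0" shows "v = 0"
proof -
  interpret chil smH ip by unfold_locales (rule assms(1))
  have "ip v v = 0" using assms(2) .
  thus ?thesis by (simp add: Pn)
qed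

lemma kadj_eq:
  assumes H: "chilbert smH ip" and G': "\<forall>h k. ip h (G' k) = B (G h) k"
  shows "kadj ip B G = G'"
  unfolding kadj_def
proof (rule the_equality)
  show "\<forall>h k. ip h (G' k) = B (G h) k" by (rule G')
next
  interpret chil smH ip by unfold_locales (rule H)
  fix G'' assume G'': "\<forall>h k. ip h (G'' k) = B (G h) k"
  show "G'' = G'"
  proof
    fix k
    have "\<And>h. ip h (G'' k - G' k) = 0" using G' G'' by (simp add: Pdiff2)
    hence "G'' k - G' k = 0" by (rule ip_zero[OF H])
    thus "G'' k = G' k" by simp
  qed
qed

lemma kadj_prop:
  assumes H: "chilbert smH ip" and "has_kadj ip B G"
  shows "ip h (kadj ip B G k) = B (G h) k"
proof -
  obtain G' where G': "\<forall>h k. ip h (G' k) = B (G h) k" using assms(2) unfolding has_kadj_def by blast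
  show ?thesis using kadj_eq[OF H G'] G' by simp
qed

lemma uniq: "\<exists>!x. P x \<Longrightarrow> P a \<Longrightarrow> P b \<Longrightarrow> a = b" by blast

lemma mem_dsum: "((a, b), (c, d)) \<in> dsum A1 A2 \<longleftrightarrow> (a, c) \<in> A1 \<and> (b, d) \<in> A2"
  by (auto simp: dsum_def)

lemma mem_dsum2: "(f, k + prod_sm s1 s2 z f) \<in> dsum A1 A2 \<longleftrightarrow>
   (fst f, fst k + s1 z (fst f)) \<in> A1 \<and> (snd f, snd k + s2 z (snd f)) \<in> A2"
  by (cases f, cases k) (simp add: mem_dsum prod_sm_def)

lemma resolv_dsum:
  fixes s1 :: "complex \<Rightarrow> 'a::banach \<Rightarrow> 'a" and s2 :: "complex \<Rightarrow> 'b::banach \<Rightarrow> 'b"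
  assumes u1: "\<forall>k. \<exists>!f. (f, k + s1 z f) \<in> A1" and u2: "\<forall>k. \<exists>!f. (f, k + s2 z f) \<in> A2"
  shows "resolv (prod_sm s1 s2) (dsum A1 A2) z k = (resolv s1 A1 z (fst k), resolv s2 A2 z (snd k))"
    and "\<forall>k. \<exists>!f. (f, k + prod_sm s1 s2 z f) \<in> dsum A1 A2"
proof -
  have r1: "(resolv s1 A1 z k1, k1 + s1 z (resolv s1 A1 z k1)) \<in> A1" for k1
    unfolding resolv_def using theI'[OF u1[rule_format, of k1]] .
  have r2: "(resolv s2 A2 z k2, k2 + s2 z (resolv s2 A2 z k2)) \<in> A2" for k2
    unfolding resolv_def using theI'[OF u2[rule_format, of k2]] .
  have uq: "f = (resolv s1 A1 z (fst k), resolv s2 A2 z (snd k))"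
    if "(f, k + prod_sm s1 s2 z f) \<in> dsum A1 A2" for f k
  proof -
    have "(fst f, fst k + s1 z (fst f)) \<in> A1" "(snd f, snd k + s2 z (snd f)) \<in> A2"
      using that mem_dsum2 by blast+
    hence "fst f = resolv s1 A1 z (fst k)" "snd f = resolv s2 A2 z (snd k)"
      using uniq[OF u1[rule_format, of "fst k"] _ r1[of "fst k"]] uniq[OF u2[rule_format, of "snd k"] _ r2[of "snd k"]]
      by blast+
    thus ?thesis by (simp add: prod_eq_iff)
  qed
  have ex: "((resolv s1 A1 z (fst k), resolv s2 A2 z (snd k)), k + prod_sm s1 s2 z (resolv s1 A1 z (fst k), resolv s2 A2 z (snd k))) \<in> dsum A1 A2" for k
    using r1 r2 by (simp add: mem_dsum2)
  show "\<forall>k. \<exists>!f. (f, k + prod_sm s1 s2 z f) \<in> dsum A1 A2"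
  proof
    fix k show "\<exists>!f. (f, k + prod_sm s1 s2 z f) \<in> dsum A1 A2"
      by (rule ex1I[where P = "\<lambda>f. (f, k + prod_sm s1 s2 z f) \<in> dsum A1 A2", OF ex uq])
  qed
  show "resolv (prod_sm s1 s2) (dsum A1 A2) z k = (resolv s1 A1 z (fst k), resolv s2 A2 z (snd k))"
    unfolding resolv_def[of "prod_sm s1 s2"] by (rule the_equality[where P = "\<lambda>f. (f, k + prod_sm s1 s2 z f) \<in> dsum A1 A2", OF ex uq])
qed

lemma dsum_comp:
  fixes s1 :: "complex \<Rightarrow> 'a::banach \<Rightarrow> 'a" and s2 :: "complex \<Rightarrow> 'b::banach \<Rightarrow> 'b"
  assumes u: "\<forall>k. \<exists>!f. (f, k + prod_sm s1 s2 z f) \<in> dsum A1 A2"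
  shows "\<forall>k. \<exists>!f. (f, k + s1 z f) \<in> A1" and "\<forall>k. \<exists>!f. (f, k + s2 z f) \<in> A2"
proof -
  show "\<forall>k. \<exists>!f. (f, k + s1 z f) \<in> A1"
  proof
    fix k1
    obtain f where f: "(f, (k1, 0) + prod_sm s1 s2 z f) \<in> dsum A1 A2" using u by blast
    have f1: "(fst f, k1 + s1 z (fst f)) \<in> A1" and f2: "(snd f, 0 + s2 z (snd f)) \<in> A2"
      using f mem_dsum2[of f "(k1, 0)"] by auto
    show "\<exists>!f. (f, k1 + s1 z f) \<in> A1"
    proof (rule ex1I[of _ "fst f"])
      show "(fst f, k1 + s1 z (fst f)) \<in> A1" by (rule f1)
    next
      fix g assume g: "(g, k1 + s1 z g) \<in> A1"
      have "((g, snd f), (k1, 0) + prod_sm s1 s2 z (g, snd f)) \<in> dsum A1 A2"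
        using g f2 mem_dsum2[of "(g, snd f)" "(k1, 0)"] by simp
      hence "(g, snd f) = f" using uniq[OF u[rule_format, of "(k1, 0)"] _ f] by blast
      thus "g = fst f" by (metis fst_conv)
    qed
  qed
  show "\<forall>k. \<exists>!f. (f, k + s2 z f) \<in> A2"
  proof
    fix k2
    obtain f where f: "(f, (0, k2) + prod_sm s1 s2 z f) \<in> dsum A1 A2" using u by blast
    have f1: "(fst f, 0 + s1 z (fst f)) \<in> A1" and f2: "(snd f, k2 + s2 z (snd f)) \<in> A2"
      using f mem_dsum2[of f "(0, k2)"] by auto
    show "\<exists>!f. (f, k2 + s2 z f) \<in> A2"
    proof (rule ex1I[of _ "snd f"])
      show "(snd f, k2 + s2 z (snd f)) \<in> A2" by (rule f2)
    next
      fix g assume g: "(g, k2 + s2 z g) \<in> A2"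
      have "((fst f, g), (0, k2) + prod_sm s1 s2 z (fst f, g)) \<in> dsum A1 A2"
        using g f1 mem_dsum2[of "(fst f, g)" "(0, k2)"] by simp
      hence "(fst f, g) = f" using uniq[OF u[rule_format, of "(0, k2)"] _ f] by blast
      thus "g = snd f" by (metis snd_conv)
    qed
  qed
qed

lemma cbounded_prod:
  fixes s1 :: "complex \<Rightarrow> 'a::banach \<Rightarrow> 'a" and s2 :: "complex \<Rightarrow> 'b::banach \<Rightarrow> 'b"
  assumes f: "cbounded s1 s1 f" and g: "cbounded s2 s2 g"
  shows "cbounded (prod_sm s1 s2) (prod_sm s1 s2) (\<lambda>k. (f (fst k), g (snd k)))"
proof -
  have lf: "Vector_Spaces.linear s1 s1 f" and lg: "Vector_Spaces.linear s2 s2 g"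
    using f g by (auto simp: cbounded_def)
  have v1: "vector_space s1" using lf by (simp add: Vector_Spaces.linear_iff)
  have v2: "vector_space s2" using lg by (simp add: Vector_Spaces.linear_iff)
  have fa: "\<And>x y. f (x + y) = f x + f y" and fs: "\<And>c x. f (s1 c x) = s1 c (f x)"
    using lf[unfolded Vector_Spaces.linear_iff] by blast+
  have ga: "\<And>x y. g (x + y) = g x + g y" and gs: "\<And>c x. g (s2 c x) = s2 c (g x)"
    using lg[unfolded Vector_Spaces.linear_iff] by blast+
  obtain C1 where C1: "\<And>x. norm (f x) \<le> C1 * norm x" using f by (auto simp: cbounded_def)
  obtain C2 where C2: "\<And>x. norm (g x) \<le> C2 * norm x" using g by (auto simp: cbounded_def)
  have lin: "Vector_Spaces.linear (prod_sm s1 s2) (prod_sm s1 s2) (\<lambda>k. (f (fst k), g (snd k)))"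
    unfolding Vector_Spaces.linear_iff
    using vs_prod[OF v1 v2] by (simp add: fa fs ga gs prod_sm_def)
  have "norm (f (fst k), g (snd k)) \<le> (\<bar>C1\<bar> + \<bar>C2\<bar>) * norm k" for k
  proof -
    have "norm (f (fst k), g (snd k)) \<le> norm (f (fst k)) + norm (g (snd k))" by (rule norm_Pair_le)
    also have "\<dots> \<le> C1 * norm (fst k) + C2 * norm (snd k)" using C1 C2 by (rule add_mono)
    also have "\<dots> \<le> \<bar>C1\<bar> * norm k + \<bar>C2\<bar> * norm k"
    proof (rule add_mono)
      have "C1 * norm (fst k) \<le> \<bar>C1\<bar> * norm (fst k)" by (simp add: mult_right_mono)
      also have "\<dots> \<le> \<bar>C1\<bar> * norm k" using norm_fst_le[of "fst k" "snd k"] by (simp add: mult_left_mono)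
      finally show "C1 * norm (fst k) \<le> \<bar>C1\<bar> * norm k" .
      have "C2 * norm (snd k) \<le> \<bar>C2\<bar> * norm (snd k)" by (simp add: mult_right_mono)
      also have "\<dots> \<le> \<bar>C2\<bar> * norm k" using norm_snd_le[of "snd k" "fst k"] by (simp add: mult_left_mono)
      finally show "C2 * norm (snd k) \<le> \<bar>C2\<bar> * norm k" .
    qed
    finally show ?thesis by (simp add: algebra_simps)
  qed
  thus ?thesis using lin unfolding cbounded_def by blast
qed




lemma lin0: assumes "Vector_Spaces.linear s1 s2 f" shows "f 0 = 0"
proof -
  have "f (0 + 0) = f 0 + f 0" using assms[unfolded Vector_Spaces.linear_iff] by blast
  thus ?thesis by simp
qed

lemma kadj0: assumes H: "chilbert smH ip" and "has_kadj ip B G" and "\<And>x. B x 0 = 0"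
  shows "kadj ip B G 0 = 0"
  by (rule ip_zero[OF H]) (simp add: kadj_prop[OF H assms(2)] assms(3))

theorem lemma4:
  fixes smH :: "complex \<Rightarrow> 'h::banach \<Rightarrow> 'h" and ip :: "'h \<Rightarrow> 'h \<Rightarrow> complex"
    and sm1 :: "complex \<Rightarrow> 'k1::banach \<Rightarrow> 'k1" and B1 :: "'k1 \<Rightarrow> 'k1 \<Rightarrow> complex"
    and sm2 :: "complex \<Rightarrow> 'k2::banach \<Rightarrow> 'k2" and B2 :: "'k2 \<Rightarrow> 'k2 \<Rightarrow> complex"
    and A1 :: "('k1 \<times> 'k1) set" and A2 :: "('k2 \<times> 'k2) set"
    and \<Gamma>1 :: "'h \<Rightarrow> 'k1" and \<Gamma>2 :: "'h \<Rightarrow> 'k2"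
    and Q1 Q2 :: "complex \<Rightarrow> 'h \<Rightarrow> 'h" and z0 :: complex
    and T1 :: "'k1 \<Rightarrow> 'k1" and T2 :: "'k2 \<Rightarrow> 'k2"
    and \<Gamma>01 :: "'h \<Rightarrow> 'k1" and \<Gamma>02 :: "'h \<Rightarrow> 'k2"
  assumes H: "chilbert smH ip"
    and K1: "pontryagin sm1 B1" and K2: "pontryagin sm2 B2"
  shows
   "((selfadj_rel sm1 B1 A1 \<and> selfadj_rel sm2 B2 A2
      \<and> z0 \<in> rset sm1 A1 \<and> z0 \<in> rset sm2 A2 \<and> Im z0 > 0
      \<and> cbounded smH sm1 \<Gamma>1 \<and> cbounded smH sm2 \<Gamma>2
      \<and> has_kadj ip B1 \<Gamma>1 \<and> has_kadj ip B2 \<Gamma>2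
      \<and> has_kadj ip ip (Q1 z0) \<and> has_kadj ip ip (Q2 z0)
      \<and> (\<forall>z \<in> rset sm1 A1. \<forall>h. Q1 z h = kadj ip ip (Q1 z0) h
            + smH (z - cnj z0) (kadj ip B1 \<Gamma>1 (\<Gamma>1 h + sm1 (z - z0) (resolv sm1 A1 z (\<Gamma>1 h)))))
      \<and> (\<forall>z \<in> rset sm2 A2. \<forall>h. Q2 z h = kadj ip ip (Q2 z0) h
            + smH (z - cnj z0) (kadj ip B2 \<Gamma>2 (\<Gamma>2 h + sm2 (z - z0) (resolv sm2 A2 z (\<Gamma>2 h))))))
     \<longrightarrow>
      (let A = dsum A1 A2; \<Gamma> = (\<lambda>h. (\<Gamma>1 h, \<Gamma>2 h)); sm = prod_sm sm1 sm2;
           \<Gamma>p = kadj ip (psum B1 B2) \<Gamma>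
       in (\<forall>z \<in> rset sm1 A1 \<inter> rset sm2 A2. \<forall>h.
             Q1 z h + Q2 z h = kadj ip ip (Q1 z0) h + kadj ip ip (Q2 z0) h
               + smH (z - cnj z0) (\<Gamma>p (\<Gamma> h + sm (z - z0) (resolv sm A z (\<Gamma> h)))))
        \<and> (inj \<Gamma>p \<longrightarrow>
             closure (module.span sm
               {\<Gamma> h + sm (z - z0) (resolv sm A z (\<Gamma> h)) | z h. z \<in> rset sm A}) = UNIV)))
    \<and>
    ((cbounded sm1 sm1 T1 \<and> selfadj_rel sm1 B1 (gr T1)
      \<and> cbounded sm2 sm2 T2 \<and> selfadj_rel sm2 B2 (gr T2)
      \<and> cbounded smH sm1 \<Gamma>01 \<and> cbounded smH sm2 \<Gamma>02
      \<and> has_kadj ip B1 \<Gamma>01 \<and> has_kadj ip B2 \<Gamma>02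
      \<and> closure (module.span (prod_sm sm1 sm2)
           {resolv (prod_sm sm1 sm2) (dsum (gr T1) (gr T2)) z (\<Gamma>01 h, \<Gamma>02 h) | z h.
              z \<in> rset (prod_sm sm1 sm2) (dsum (gr T1) (gr T2))}) = UNIV
      \<and> (inj \<Gamma>01 \<or> inj \<Gamma>02))
     \<longrightarrow>
      (\<forall>f. (\<forall>z \<in> rset (prod_sm sm1 sm2) (dsum (gr T1) (gr T2)). \<forall>h.
              ip f (kadj ip B1 \<Gamma>01 (resolv sm1 (gr T1) z (\<Gamma>01 h))
                    + kadj ip B2 \<Gamma>02 (resolv sm2 (gr T2) z (\<Gamma>02 h))) = 0)
           \<longrightarrow> f = 0))"
proof -
  interpret hc: chil smH ip by unfold_locales (rule H)
  obtain J1 where J1: "Vector_Spaces.linear sm1 sm1 J1" "\<And>x. J1 (J1 x) = x" "\<And>x y. B1 (J1 x) y = B1 x (J1 y)"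
    "chilbert sm1 (\<lambda>x y. B1 x (J1 y))" "\<And>x y. B1 y x = cnj (B1 x y)" "J1 0 = 0"
    "\<And>x y z. B1 x (y + z) = B1 x y + B1 x z" "\<And>x. B1 x 0 = 0"
    using pontr[OF K1] by blast
  obtain J2 where J2: "Vector_Spaces.linear sm2 sm2 J2" "\<And>x. J2 (J2 x) = x" "\<And>x y. B2 (J2 x) y = B2 x (J2 y)"
    "chilbert sm2 (\<lambda>x y. B2 x (J2 y))" "\<And>x y. B2 y x = cnj (B2 x y)" "J2 0 = 0"
    "\<And>x y z. B2 x (y + z) = B2 x y + B2 x z" "\<And>x. B2 x 0 = 0"
    using pontr[OF K2] by blast
  interpret c1: chil sm1 "\<lambda>x y. B1 x (J1 y)" by unfold_locales (rule J1(4))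
  interpret c2: chil sm2 "\<lambda>x y. B2 x (J2 y)" by unfold_locales (rule J2(4))
  define PP where "PP = (\<lambda>(x::'k1 \<times> 'k2) (y::'k1 \<times> 'k2). B1 (fst x) (J1 (fst y)) + B2 (snd x) (J2 (snd y)))"
  have chP: "chilbert (prod_sm sm1 sm2) PP" unfolding PP_def by (rule chil_prod[OF J1(4) J2(4)])
  interpret pc: chil "prod_sm sm1 sm2" PP by unfold_locales (rule chP)
  have z1: "sm1 0 a = 0" for a using module.scale_zero_left[OF c1.md] .
  have z2: "sm2 0 a = 0" for a using module.scale_zero_left[OF c2.md] .
  show ?thesis
  proof ((intro conjI impI; elim conjE), goal_cases)
    case 1
    note r01 = 1(3) and r02 = 1(4) and G1 = 1(8) and G2 = 1(9) and Q1 = 1(12) and Q2 = 1(13)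
    have Gp: "kadj ip (psum B1 B2) (\<lambda>h. (\<Gamma>1 h, \<Gamma>2 h)) = (\<lambda>k. kadj ip B1 \<Gamma>1 (fst k) + kadj ip B2 \<Gamma>2 (snd k))"
      by (rule kadj_eq[OF H]) (simp add: hc.Padd2 kadj_prop[OF H G1] kadj_prop[OF H G2] psum_def)
    have uq1: "\<forall>k. \<exists>!f. (f, k + sm1 z f) \<in> A1" if "z \<in> rset sm1 A1" for z
      using that by (simp add: rset_def)
    have uq2: "\<forall>k. \<exists>!f. (f, k + sm2 z f) \<in> A2" if "z \<in> rset sm2 A2" for z
      using that by (simp add: rset_def)
    show ?case unfolding Let_def
    proof (intro conjI ballI allI impI, goal_cases)
      case (1 z h)
      have zz1: "z \<in> rset sm1 A1" and zz2: "z \<in> rset sm2 A2" using 1 by auto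
      have R: "resolv (prod_sm sm1 sm2) (dsum A1 A2) z (\<Gamma>1 h, \<Gamma>2 h) = (resolv sm1 A1 z (\<Gamma>1 h), resolv sm2 A2 z (\<Gamma>2 h))"
        using resolv_dsum(1)[of sm1 z A1 sm2 A2, OF uq1[OF zz1] uq2[OF zz2], of "(\<Gamma>1 h, \<Gamma>2 h)"] by simp
      have q1: "Q1 z h = kadj ip ip (Q1 z0) h
            + smH (z - cnj z0) (kadj ip B1 \<Gamma>1 (\<Gamma>1 h + sm1 (z - z0) (resolv sm1 A1 z (\<Gamma>1 h))))"
        using Q1 zz1 by blast
      have q2: "Q2 z h = kadj ip ip (Q2 z0) h
            + smH (z - cnj z0) (kadj ip B2 \<Gamma>2 (\<Gamma>2 h + sm2 (z - z0) (resolv sm2 A2 z (\<Gamma>2 h))))"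
        using Q2 zz2 by blast
      show ?case by (simp add: R Gp prod_sm_def q1 q2 hc.smadd algebra_simps)
    next
      case 2
      have u0: "\<forall>k. \<exists>!f. (f, k + prod_sm sm1 sm2 z0 f) \<in> dsum A1 A2"
        by (rule resolv_dsum(2)[of sm1 z0 A1 sm2 A2, OF uq1[OF r01] uq2[OF r02]])
      have R0: "resolv (prod_sm sm1 sm2) (dsum A1 A2) z0 = (\<lambda>k. (resolv sm1 A1 z0 (fst k), resolv sm2 A2 z0 (snd k)))"
        using resolv_dsum(1)[of sm1 z0 A1 sm2 A2, OF uq1[OF r01] uq2[OF r02]] by blast
      have cb1: "cbounded sm1 sm1 (resolv sm1 A1 z0)" using r01 by (simp add: rset_def)
      have cb2: "cbounded sm2 sm2 (resolv sm2 A2 z0)" using r02 by (simp add: rset_def)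
      have z0P: "z0 \<in> rset (prod_sm sm1 sm2) (dsum A1 A2)"
        unfolding rset_def using u0 cbounded_prod[OF cb1 cb2] R0 by simp
      have inj: "inj (\<lambda>k. kadj ip B1 \<Gamma>1 (fst k) + kadj ip B2 \<Gamma>2 (snd k))" using 2 Gp by simp
      have G0: "kadj ip B1 \<Gamma>1 (fst (0::'k1\<times>'k2)) + kadj ip B2 \<Gamma>2 (snd (0::'k1\<times>'k2)) = 0"
        using kadj0[OF H G1 J1(8)] kadj0[OF H G2 J2(8)] by simp
      show ?case
      proof (rule pc.dense_iff[THEN iffD2], intro allI impI, goal_cases)
        case (1 x)
        have "PP (\<Gamma>1 h, \<Gamma>2 h) x = 0" for h
        proof -
          have "(\<Gamma>1 h, \<Gamma>2 h) = (\<Gamma>1 h, \<Gamma>2 h) + prod_sm sm1 sm2 (z0 - z0) (resolv (prod_sm sm1 sm2) (dsum A1 A2) z0 (\<Gamma>1 h, \<Gamma>2 h))"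
            by (simp add: prod_sm_def z1 z2)
          moreover have "(\<Gamma>1 h, \<Gamma>2 h) + prod_sm sm1 sm2 (z0 - z0) (resolv (prod_sm sm1 sm2) (dsum A1 A2) z0 (\<Gamma>1 h, \<Gamma>2 h))
              \<in> {(\<Gamma>1 h, \<Gamma>2 h) + prod_sm sm1 sm2 (z - z0) (resolv (prod_sm sm1 sm2) (dsum A1 A2) z (\<Gamma>1 h, \<Gamma>2 h)) | z h.
                  z \<in> rset (prod_sm sm1 sm2) (dsum A1 A2)}" using z0P by blast
          ultimately show ?thesis using 1 by (metis (no_types, lifting))
        qed
        hence "ip h (kadj ip B1 \<Gamma>1 (J1 (fst x)) + kadj ip B2 \<Gamma>2 (J2 (snd x))) = 0" for h
          by (simp add: PP_def hc.Padd2 kadj_prop[OF H G1] kadj_prop[OF H G2])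
        hence "kadj ip B1 \<Gamma>1 (fst (J1 (fst x), J2 (snd x))) + kadj ip B2 \<Gamma>2 (snd (J1 (fst x), J2 (snd x))) = 0"
          using ip_zero[OF H] by simp
        hence "(\<lambda>k. kadj ip B1 \<Gamma>1 (fst k) + kadj ip B2 \<Gamma>2 (snd k)) (J1 (fst x), J2 (snd x))
             = (\<lambda>k. kadj ip B1 \<Gamma>1 (fst k) + kadj ip B2 \<Gamma>2 (snd k)) 0" using G0 by simp
        hence "(J1 (fst x), J2 (snd x)) = 0" by (rule injD[OF inj])
        hence "J1 (fst x) = 0" "J2 (snd x) = 0" by (simp_all add: prod_eq_iff)
        hence "fst x = 0" "snd x = 0" by (metis J1(2) J1(6), metis J2(2) J2(6))
        thus ?case by (simp add: prod_eq_iff)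
      qed
    qed
  next
    case 2
    note G1 = 2(7) and G2 = 2(8) and l1 = 2(5) and l2 = 2(6) and dn = 2(9) and ij = 2(10)
    have g01: "\<Gamma>01 0 = 0" using l1 lin0 by (auto simp: cbounded_def)
    have g02: "\<Gamma>02 0 = 0" using l2 lin0 by (auto simp: cbounded_def)
    show ?case
    proof (intro allI impI, goal_cases)
      case (1 f)
      define w where "w = (J1 (\<Gamma>01 f), J2 (\<Gamma>02 f))"
      have Pw: "PP s w = 0" if sS: "s \<in> {resolv (prod_sm sm1 sm2) (dsum (gr T1) (gr T2)) z (\<Gamma>01 h, \<Gamma>02 h) | z h.
              z \<in> rset (prod_sm sm1 sm2) (dsum (gr T1) (gr T2))}" for s
      proof -
        obtain z h where s: "s = resolv (prod_sm sm1 sm2) (dsum (gr T1) (gr T2)) z (\<Gamma>01 h, \<Gamma>02 h)"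
          and zr: "z \<in> rset (prod_sm sm1 sm2) (dsum (gr T1) (gr T2))" using sS by blast
        have u: "\<forall>k. \<exists>!f. (f, k + prod_sm sm1 sm2 z f) \<in> dsum (gr T1) (gr T2)" using zr by (simp add: rset_def)
        have s2: "s = (resolv sm1 (gr T1) z (\<Gamma>01 h), resolv sm2 (gr T2) z (\<Gamma>02 h))"
          using s resolv_dsum(1)[of sm1 z "gr T1" sm2 "gr T2", OF dsum_comp(1)[OF u] dsum_comp(2)[OF u], of "(\<Gamma>01 h, \<Gamma>02 h)"] by simp
        have e: "ip f (kadj ip B1 \<Gamma>01 (resolv sm1 (gr T1) z (\<Gamma>01 h))
                    + kadj ip B2 \<Gamma>02 (resolv sm2 (gr T2) z (\<Gamma>02 h))) = 0"
          using 1 zr by blast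
        have "PP s w = B1 (fst s) (\<Gamma>01 f) + B2 (snd s) (\<Gamma>02 f)" by (simp add: PP_def w_def J1(2) J2(2))
        also have "\<dots> = cnj (B1 (\<Gamma>01 f) (fst s) + B2 (\<Gamma>02 f) (snd s))"
          using J1(5)[of "\<Gamma>01 f" "fst s"] J2(5)[of "\<Gamma>02 f" "snd s"] by simp
        also have "B1 (\<Gamma>01 f) (fst s) + B2 (\<Gamma>02 f) (snd s) = 0"
          using e by (simp add: s2 hc.Padd2 kadj_prop[OF H G1] kadj_prop[OF H G2])
        finally show ?thesis by simp
      qed
      have "w = 0" using pc.dense_iff[THEN iffD1, OF dn] Pw by blast
      hence "J1 (\<Gamma>01 f) = 0" "J2 (\<Gamma>02 f) = 0" by (simp_all add: w_def prod_eq_iff)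
      hence a: "\<Gamma>01 f = 0" "\<Gamma>02 f = 0" by (metis J1(2) J1(6), metis J2(2) J2(6))
      show "f = 0" using ij
      proof
        assume "inj \<Gamma>01" thus "f = 0" using a(1) g01 by (metis injD)
      next
        assume "inj \<Gamma>02" thus "f = 0" using a(2) g02 by (metis injD)
      qed
    qed
  qed
qed


end
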